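(* For every $m\in\mathbb{N}$ and every composition $\alpha\in\mathcal{C}_m$ of length $N$, $$W_\alpha=\frac1{2N}\bigoplus_{i=1}^N\big(\mathrm{U}_{\alpha_i}-\mathrm{U}_{\alpha_i}^\top\big)+\frac1{2N^2}\mathbbm{1}_{m\times m}.$$
   Context: $\mathcal{C}_m$ is the set of compositions of $m$: tuples $\alpha=(\alpha_1,\dots,\alpha_N)$ of positive integers with $\alpha_1+\dots+\alpha_N=m$. Let $E^j:[0,1]\to\mathbb{R}^m$, $t\mapsto te_j$. Path concatenation: $(X\star Y)(t)=X(2t)$ for $t\in[0,\frac12)$ and $X(1)+Y(2t-1)$ for $t\in[\frac12,1]$. The $i$-th axis subpath is $\mathsf{Ax}^{\alpha,i}=E^{\alpha_1+\dots+\alpha_{i-1}+1}\star\dots\star E^{\alpha_1+\dots+\alpha_i}$. For a path $X:[0,1]\to\mathbb{R}^m$, its $2$-truncated signature is $\sigma(X)=1\oplus(X(1)-X(0))\oplus\big(\int_{0<t_1<t_2<1}\dot X_{a}(t_1)\dot X_{b}(t_2)\,dt_1dt_2\big)_{a,b}\in\mathcal{G}_{m,2}$, where $\mathcal{G}_{m,2}=\exp(\mathfrak{g}_{m,2})$ is the free nilpotent Lie group of step $2$ inside $T_{m,2}=\mathbb{R}\oplus\mathbb{R}^m\oplus\mathbb{R}^{m\times m}$ (truncated tensor product; $\mathfrak{g}_{m,2}$ the Lie subalgebra generated by $e_1,\dots,e_m$; $\exp(\mathbf{z})=1+\mathbf{z}+\mathbf{z}^{\otimes2}/2$; $\log=\exp^{-1}$).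 For $\mathbf{x}\in\mathcal{G}_{m,2}^N$, $\mathsf{bary}(\mathbf{x})$ is the unique $\mathbf{m}\in\mathcal{G}_{m,2}$ with $\sum_i\log(\mathbf{m}^{-1}\mathbf{x}_i)=0$, and $\mathsf{bary}^{(2)}$ its matrix (level-2) component. Define $W_\alpha=\mathsf{bary}^{(2)}(\sigma(\mathsf{Ax}^{\alpha,1}),\dots,\sigma(\mathsf{Ax}^{\alpha,N}))\in\mathbb{R}^{m\times m}$. $\mathrm{U}_n$ is the strictly upper triangular $n\times n$ matrix with all entries above the diagonal equal to $1$, $\bigoplus$ denotes block diagonal sum, and $\mathbbm{1}_{m\times m}$ is the all-ones matrix. *)

theory Defs
  imports "HOL-Analysis.Analysis"
begin

text \<open>Conventions: vectors in R^m are functions nat => real, coordinates indexed 0..m-1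
 (so the paper's e_j is our unit j-1); m x m matrices are nat => nat => real, indices 0..m-1.
 Elements of the truncated tensor algebra T_{m,2} = R + R^m + R^{m x m} are triples.\<close>

type_synonym tens = "real \<times> (nat \<Rightarrow> real) \<times> (nat \<Rightarrow> nat \<Rightarrow> real)"

definition unitv :: "nat \<Rightarrow> nat \<Rightarrow> real" where
  "unitv j = (\<lambda>k. if k = j then 1 else 0)"

definition tone :: tens where "tone = (1, (\<lambda>_. 0), (\<lambda>_ _. 0))"
definition tzero :: tens where "tzero = (0, (\<lambda>_. 0), (\<lambda>_ _. 0))"

definition tadd :: "tens \<Rightarrow> tens \<Rightarrow> tens" where
  "tadd x y = (case x of (a, v, M) \<Rightarrow> case y of (b, w, P) \<Rightarrow>
     (a + b, (\<lambda>k. v k + w k), (\<lambda>k l. M k l + P k l)))"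

definition tscale :: "real \<Rightarrow> tens \<Rightarrow> tens" where
  "tscale c x = (case x of (a, v, M) \<Rightarrow> (c * a, (\<lambda>k. c * v k), (\<lambda>k l. c * M k l)))"

definition tmul :: "tens \<Rightarrow> tens \<Rightarrow> tens" where
  "tmul x y = (case x of (a, v, M) \<Rightarrow> case y of (b, w, P) \<Rightarrow>
     (a * b, (\<lambda>k. a * w k + b * v k), (\<lambda>k l. a * P k l + b * M k l + v k * w l)))"

definition tsum_list :: "tens list \<Rightarrow> tens" where
  "tsum_list xs = foldr tadd xs tzero"

definition tbracket :: "tens \<Rightarrow> tens \<Rightarrow> tens" where
  "tbracket x y = tadd (tmul x y) (tscale (-1) (tmul y x))"

inductive_set lie_gen :: "nat \<Rightarrow> tens set" for m :: nat where
  gen: "j < m \<Longrightarrow> (0, unitv j, (\<lambda>_ _. 0)) \<in> lie_gen m"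
| add: "x \<in> lie_gen m \<Longrightarrow> y \<in> lie_gen m \<Longrightarrow> tadd x y \<in> lie_gen m"
| scale: "x \<in> lie_gen m \<Longrightarrow> tscale c x \<in> lie_gen m"
| brk: "x \<in> lie_gen m \<Longrightarrow> y \<in> lie_gen m \<Longrightarrow> tbracket x y \<in> lie_gen m"

definition texp :: "tens \<Rightarrow> tens" where
  "texp z = tadd tone (tadd z (tscale (1/2) (tmul z z)))"

definition Gm2 :: "nat \<Rightarrow> tens set" where
  "Gm2 m = texp ` lie_gen m"

definition tlog :: "nat \<Rightarrow> tens \<Rightarrow> tens" where
  "tlog m x = (THE z. z \<in> lie_gen m \<and> texp z = x)"

definition tinv :: "tens \<Rightarrow> tens" where
  "tinv x = (THE y. tmul y x = tone \<and> tmul x y = tone)"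

definition bary :: "nat \<Rightarrow> tens list \<Rightarrow> tens" where
  "bary m xs = (THE \<mu>. \<mu> \<in> Gm2 m \<and>
      tsum_list (map (\<lambda>x. tlog m (tmul (tinv \<mu>) x)) xs) = tzero)"

definition bary2 :: "nat \<Rightarrow> tens list \<Rightarrow> nat \<Rightarrow> nat \<Rightarrow> real" where
  "bary2 m xs = snd (snd (bary m xs))"

type_synonym path = "real \<Rightarrow> nat \<Rightarrow> real"

definition sig2 :: "path \<Rightarrow> nat \<Rightarrow> nat \<Rightarrow> real" where
  "sig2 X a b = integral {p :: real \<times> real. 0 < fst p \<and> fst p < snd p \<and> snd p < 1}
      (\<lambda>p. deriv (\<lambda>s. X s a) (fst p) * deriv (\<lambda>s. X s b) (snd p))"

definition sig :: "path \<Rightarrow> tens" where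
  "sig X = (1, (\<lambda>a. X 1 a - X 0 a), sig2 X)"

definition Epath :: "nat \<Rightarrow> path" where
  "Epath j = (\<lambda>t k. t * unitv j k)"

definition pcat :: "path \<Rightarrow> path \<Rightarrow> path" where
  "pcat X Y = (\<lambda>t. if t < 1/2 then X (2 * t) else (\<lambda>k. X 1 k + Y (2 * t - 1) k))"

fun pchain :: "nat list \<Rightarrow> path" where
  "pchain [] = (\<lambda>t k. 0)"
| "pchain [j] = Epath j"
| "pchain (j # js) = pcat (Epath j) (pchain js)"

definition pref :: "nat list \<Rightarrow> nat \<Rightarrow> nat" where
  "pref \<alpha> i = sum_list (take i \<alpha>)"

text \<open>i-th axis subpath (i 0-based): E^{pref i + 1} * ... * E^{pref (i+1)} in 1-based terms.\<close>
definition Ax :: "nat list \<Rightarrow> nat \<Rightarrow> path" where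
  "Ax \<alpha> i = pchain [pref \<alpha> i ..< pref \<alpha> (Suc i)]"

definition W :: "nat list \<Rightarrow> nat \<Rightarrow> nat \<Rightarrow> real" where
  "W \<alpha> = bary2 (sum_list \<alpha>) (map (\<lambda>i. sig (Ax \<alpha> i)) [0..<length \<alpha>])"

definition Umat :: "nat \<Rightarrow> nat \<Rightarrow> nat \<Rightarrow> real" where
  "Umat n i j = (if i < n \<and> j < n \<and> i < j then 1 else 0)"

definition transp :: "(nat \<Rightarrow> nat \<Rightarrow> real) \<Rightarrow> nat \<Rightarrow> nat \<Rightarrow> real" where
  "transp A i j = A j i"

definition bdsum :: "nat list \<Rightarrow> (nat \<Rightarrow> nat \<Rightarrow> nat \<Rightarrow> real) \<Rightarrow> nat \<Rightarrow> nat \<Rightarrow> real" where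
  "bdsum ns B a b = (if \<exists>i<length ns. pref ns i \<le> a \<and> a < pref ns (Suc i) \<and> pref ns i \<le> b \<and> b < pref ns (Suc i)
     then (let i = (THE i. i < length ns \<and> pref ns i \<le> a \<and> a < pref ns (Suc i))
           in B i (a - pref ns i) (b - pref ns i)) else 0)"

definition is_composition :: "nat \<Rightarrow> nat list \<Rightarrow> bool" where
  "is_composition m \<alpha> \<longleftrightarrow> (\<forall>i<length \<alpha>. 0 < \<alpha> ! i) \<and> sum_list \<alpha> = m"

end

theory Submission
  imports Defs
begin

definition ramp :: "real \<Rightarrow> real \<Rightarrow> real \<Rightarrow> real" where
  "ramp l r s = (if s \<le> l then 0 else if r \<le> s then 1 else (s - l) / (r - l))"

lemma ramp_deriv:
  fixes f :: "real \<Rightarrow> real"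
  assumes f: "\<And>s. 0 < s \<Longrightarrow> s < 1 \<Longrightarrow> f s = ramp l r s"
    and lr: "0 \<le> l" "l < r" "r \<le> 1" and s: "0 < s" "s < 1" "s \<noteq> l" "s \<noteq> r"
  shows "deriv f s = (if l < s \<and> s < r then 1 / (r - l) else 0)"
proof -
  consider "s < l" | "l < s" "s < r" | "r < s" using s by linarith
  then show ?thesis
  proof cases
    case 1
    have "(f has_field_derivative 0) (at s)"
      by (rule has_field_derivative_transform_within_open[where f="\<lambda>_. 0" and S="{0<..<l}"])
         (use 1 s f lr in \<open>auto simp: ramp_def\<close>)
    then show ?thesis using 1 by (simp add: DERIV_imp_deriv)
  next
    case 2
    have d: "((\<lambda>x. (x - l) / (r - l)) has_field_derivative 1 / (r - l)) (at s)"
      using lr by (auto intro!: derivative_eq_intros)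
    have "(f has_field_derivative 1 / (r - l)) (at s)"
      by (rule has_field_derivative_transform_within_open[OF d, where S="{l<..<r}"])
         (use 2 s f lr in \<open>auto simp: ramp_def\<close>)
    then show ?thesis using 2 by (simp add: DERIV_imp_deriv)
  next
    case 3
    have "(f has_field_derivative 0) (at s)"
      by (rule has_field_derivative_transform_within_open[where f="\<lambda>_. 1" and S="{r<..<1}"])
         (use 3 s f lr in \<open>auto simp: ramp_def\<close>)
    then show ?thesis using 3 by (simp add: DERIV_imp_deriv)
  qed
qed

definition SS :: "(real \<times> real) set" where
  "SS = {p :: real \<times> real. 0 < fst p \<and> fst p < snd p \<and> snd p < 1}"

lemma negl_fst: "negligible {p :: real \<times> real. fst p = c}"
proof -
  have "{p :: real \<times> real. fst p = c} = {x. x \<bullet> (1,0) = c}" by (auto simp: inner_prod_def)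
  moreover have "(1::real, 0::real) \<in> Basis" by (simp add: Basis_prod_def)
  ultimately show ?thesis using negligible_standard_hyperplane by metis
qed

lemma negl_snd: "negligible {p :: real \<times> real. snd p = c}"
proof -
  have "{p :: real \<times> real. snd p = c} = {x. x \<bullet> (0,1) = c}" by (auto simp: inner_prod_def)
  moreover have "(0::real, 1::real) \<in> Basis" by (simp add: Basis_prod_def)
  ultimately show ?thesis using negligible_standard_hyperplane by metis
qed

lemma int_reduce:
  fixes f1 f2 :: "real \<Rightarrow> real"
  assumes f1: "\<And>s. 0 < s \<Longrightarrow> s < 1 \<Longrightarrow> f1 s = ramp l1 r1 s"
    and f2: "\<And>s. 0 < s \<Longrightarrow> s < 1 \<Longrightarrow> f2 s = ramp l2 r2 s"
    and lr1: "0 \<le> l1" "l1 < r1" "r1 \<le> 1" and lr2: "0 \<le> l2" "l2 < r2" "r2 \<le> 1"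
  shows "integral SS (\<lambda>p. deriv f1 (fst p) * deriv f2 (snd p)) =
     1 / (r1 - l1) * (1 / (r2 - l2)) * integral {p. 0 < fst p \<and> fst p < snd p \<and> snd p < 1 \<and>
        l1 < fst p \<and> fst p < r1 \<and> l2 < snd p \<and> snd p < r2} (\<lambda>_. 1)"
proof -
  let ?N = "{p :: real \<times> real. fst p = l1} \<union> {p. fst p = r1} \<union> {p. snd p = l2} \<union> {p. snd p = r2}"
  let ?g = "\<lambda>p::real\<times>real. 1 / (r1 - l1) * (1 / (r2 - l2)) *
        (if l1 < fst p \<and> fst p < r1 \<and> l2 < snd p \<and> snd p < r2 then 1 else (0::real))"
  have neg: "negligible ?N" using negl_fst negl_snd by (simp add: negligible_Un)
  have "integral SS (\<lambda>p. deriv f1 (fst p) * deriv f2 (snd p)) = integral SS ?g"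
  proof (rule integral_spike[OF neg])
    fix p assume p: "p \<in> SS - ?N"
    have a: "deriv f1 (fst p) = (if l1 < fst p \<and> fst p < r1 then 1 / (r1 - l1) else 0)"
      by (rule ramp_deriv[OF f1 lr1]) (use p in \<open>auto simp: SS_def\<close>)
    have b: "deriv f2 (snd p) = (if l2 < snd p \<and> snd p < r2 then 1 / (r2 - l2) else 0)"
      by (rule ramp_deriv[OF f2 lr2]) (use p in \<open>auto simp: SS_def\<close>)
    show "?g p = deriv f1 (fst p) * deriv f2 (snd p)" unfolding a b by auto
  qed
  also have "\<dots> = 1 / (r1 - l1) * (1 / (r2 - l2)) * integral SS
       (\<lambda>p. if l1 < fst p \<and> fst p < r1 \<and> l2 < snd p \<and> snd p < r2 then 1 else (0::real))"
    by simp
  also have "integral SS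
       (\<lambda>p. if l1 < fst p \<and> fst p < r1 \<and> l2 < snd p \<and> snd p < r2 then 1 else (0::real))
     = integral {p. 0 < fst p \<and> fst p < snd p \<and> snd p < 1 \<and>
        l1 < fst p \<and> fst p < r1 \<and> l2 < snd p \<and> snd p < r2} (\<lambda>_. 1)"
  proof -
    have "integral SS
       (\<lambda>p. if l1 < fst p \<and> fst p < r1 \<and> l2 < snd p \<and> snd p < r2 then 1 else (0::real))
      = integral UNIV (\<lambda>x. if x \<in> SS then (if l1 < fst x \<and> fst x < r1 \<and> l2 < snd x \<and> snd x < r2 then 1 else (0::real)) else 0)"
      by (rule integral_restrict_UNIV[symmetric])
    also have "\<dots> = integral UNIV (\<lambda>x. if x \<in> {p. 0 < fst p \<and> fst p < snd p \<and> snd p < 1 \<and>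
        l1 < fst p \<and> fst p < r1 \<and> l2 < snd p \<and> snd p < r2} then 1 else (0::real))"
      by (rule arg_cong[where f="integral UNIV"]) (auto simp: SS_def)
    also have "\<dots> = integral {p. 0 < fst p \<and> fst p < snd p \<and> snd p < 1 \<and>
        l1 < fst p \<and> fst p < r1 \<and> l2 < snd p \<and> snd p < r2} (\<lambda>_. 1)"
      by (rule integral_restrict_UNIV)
    finally show ?thesis .
  qed
  finally show ?thesis .
qed

lemma region_box:
  assumes "0 \<le> l1" "l1 < r1" "r1 \<le> l2" "l2 < r2" "r2 \<le> (1::real)"
  shows "integral {p. 0 < fst p \<and> fst p < snd p \<and> snd p < 1 \<and>
        l1 < fst p \<and> fst p < r1 \<and> l2 < snd p \<and> snd p < r2} (\<lambda>_. 1::real) = (r1 - l1) * (r2 - l2)"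
proof -
  have "{p. 0 < fst p \<and> fst p < snd p \<and> snd p < 1 \<and>
        l1 < fst p \<and> fst p < r1 \<and> l2 < snd p \<and> snd p < r2} = box (l1, l2) (r1, r2)"
    using assms by (auto simp: box_def Basis_prod_def inner_prod_def)
  moreover have "integral (box (l1, l2) (r1, r2)) (\<lambda>_. 1::real) = (r1 - l1) * (r2 - l2)"
    using assms by (simp add: integral_open_interval content_Pair)
  ultimately show ?thesis by simp
qed

lemma region_empty:
  assumes "r2 \<le> (l1::real)"
  shows "integral {p. 0 < fst p \<and> fst p < snd p \<and> snd p < 1 \<and>
        l1 < fst p \<and> fst p < r1 \<and> l2 < snd p \<and> snd p < r2} (\<lambda>_. 1::real) = 0"
proof -
  have "{p. 0 < fst p \<and> fst p < snd p \<and> snd p < 1 \<and>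
        l1 < fst p \<and> fst p < r1 \<and> l2 < snd p \<and> snd p < r2} = {}"
    using assms by auto
  then show ?thesis by (metis integral_empty)
qed

lemma triangle:
  assumes lr: "l < (r::real)"
  shows "integral {p. l < fst p \<and> fst p < snd p \<and> snd p < r} (\<lambda>_. 1::real) = (r - l)^2 / 2"
proof -
  define T where "T = {p::real\<times>real. l < fst p \<and> fst p < snd p \<and> snd p < r}"
  define T' where "T' = {p::real\<times>real. l < snd p \<and> snd p < fst p \<and> fst p < r}"
  define C where "C = cbox (l, l) (r, r)"
  have TC: "T \<subseteq> C" unfolding T_def C_def by (auto simp: cbox_def Basis_prod_def inner_prod_def)
  have T'C: "T' \<subseteq> C" unfolding T'_def C_def by (auto simp: cbox_def Basis_prod_def inner_prod_def)
  have "open T" unfolding T_def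
    by (intro open_Collect_conj open_Collect_less continuous_intros)
  moreover have "bounded T" using TC unfolding C_def by (meson bounded_cbox bounded_subset)
  ultimately have "T \<in> lmeasurable" by (simp add: lmeasurable_open)
  then have "(\<lambda>_. 1::real) integrable_on T" using lmeasurable_iff_integrable_on by blast
  then have hT: "((\<lambda>_. 1::real) has_integral integral T (\<lambda>_. 1)) T" by (rule integrable_integral)
  define iT where "iT = integral T (\<lambda>_. 1::real)"
  have hTC: "((\<lambda>x. if x \<in> T then 1 else 0::real) has_integral iT) C"
    using hT TC iT_def by simp
  have tw: "((\<lambda>x. (\<lambda>x. if x \<in> T then 1 else 0::real) (prod.swap x)) has_integral iT) (cbox (l,l) (r,r))"
  proof -
    have c1: "\<And>u v::real\<times>real. measure lborel (prod.swap ` cbox u v) = 1 * measure lborel (cbox u v)"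
      by (metis content_Pair mult.commute old.prod.exhaust swap_cbox_Pair mult_1)
    have c2: "\<And>u v::real\<times>real. \<exists>w z. prod.swap ` cbox u v = cbox w z"
      by (metis old.prod.exhaust swap_cbox_Pair)
    have c3: "\<And>x. continuous (at x) prod.swap" by (simp add: isCont_swap)
    have "((\<lambda>x. (\<lambda>x. if x \<in> T then 1 else 0::real) (prod.swap x)) has_integral (1 / 1) *\<^sub>R iT) (prod.swap ` cbox (l,l) (r,r))"
      by (rule has_integral_twiddle[of 1 prod.swap prod.swap, OF _ _ _ c3 c2 c2 c1]) (use hTC C_def in auto)
    then show ?thesis by simp
  qed
  have sC: "prod.swap ` C = C" unfolding C_def by simp
  have hT'C: "((\<lambda>x. if x \<in> T' then 1 else 0::real) has_integral iT) C"
  proof -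
    have "(\<lambda>x. (\<lambda>x. if x \<in> T then 1 else 0::real) (prod.swap x)) = (\<lambda>x. if x \<in> T' then 1 else 0::real)"
      by (auto simp: T_def T'_def)
    then show ?thesis using tw C_def by simp
  qed
  have hsum: "((\<lambda>x. (if x \<in> T then 1 else 0) + (if x \<in> T' then 1 else 0::real)) has_integral iT + iT) C"
    by (rule has_integral_add[OF hTC hT'C])
  let ?N = "{p :: real \<times> real. fst p = l} \<union> {p. fst p = r} \<union> {p. snd p = l} \<union> {p. snd p = r}
     \<union> {x. (1, -1) \<bullet> x = 0}"
  have negD: "negligible {x :: real\<times>real. (1, -1) \<bullet> x = 0}"
    by (rule negligible_hyperplane) (simp add: zero_prod_def)
  have neg: "negligible ?N" using negl_fst negl_snd negD by (simp add: negligible_Un)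
  have h1: "((\<lambda>x. 1::real) has_integral iT + iT) C"
  proof (rule has_integral_spike[OF neg _ hsum])
    fix x assume x: "x \<in> C - ?N"
    obtain a b where ab: "x = (a, b)" by (cases x)
    show "(1::real) = (if x \<in> T then 1 else 0) + (if x \<in> T' then 1 else 0)"
    proof -
      have "l \<le> a" "a \<le> r" "l \<le> b" "b \<le> r" using x unfolding ab C_def by auto
      moreover have "a \<noteq> l" "a \<noteq> r" "b \<noteq> l" "b \<noteq> r" "a \<noteq> b" using x unfolding ab by auto
      ultimately have "(l < a \<and> a < b \<and> b < r \<and> \<not> (l < b \<and> b < a \<and> a < r)) \<or>
          (l < b \<and> b < a \<and> a < r \<and> \<not> (l < a \<and> a < b \<and> b < r))" by linarith
      then show ?thesis unfolding ab T_def T'_def by auto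
    qed
  qed
  have h2: "((\<lambda>x. 1::real) has_integral (r - l) * (r - l)) C"
    using has_integral_const[of "1::real" "(l,l)" "(r,r)"] lr unfolding C_def
    by (simp add: content_Pair)
  have "iT + iT = (r - l) * (r - l)" using has_integral_unique[OF h1 h2] .
  then show ?thesis unfolding iT_def T_def by (simp add: power2_eq_square)
qed

definition lo :: "nat \<Rightarrow> real" where "lo k = 1 - (1/2)^k"
definition hi :: "nat \<Rightarrow> nat \<Rightarrow> real" where
  "hi n k = (if Suc k = n then 1 else 1 - (1/2)^(Suc k))"

lemma pchain_out: "a \<notin> set js \<Longrightarrow> pchain js s a = 0"
  by (induction js arbitrary: s rule: pchain.induct) (auto simp: Epath_def unitv_def pcat_def)

lemma ramp_shift: "a < b \<Longrightarrow> ramp a b (2 * s - 1) = ramp ((a + 1) / 2) ((b + 1) / 2) s"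
  unfolding ramp_def by (auto simp: field_simps)

lemma lo_Suc: "lo (Suc k) = (lo k + 1) / 2" unfolding lo_def by (simp add: field_simps)
lemma hi_Suc: "k < n \<Longrightarrow> hi (Suc n) (Suc k) = (hi n k + 1) / 2" unfolding hi_def by (simp add: field_simps)
lemma lo_hi: "k < n \<Longrightarrow> lo k < hi n k" unfolding lo_def hi_def by (auto simp: field_simps)
lemma lo_ge0: "0 \<le> lo k" unfolding lo_def by (simp add: power_le_one)
lemma hi_le1: "hi n k \<le> 1" unfolding hi_def by auto
lemma hi_lo: "k < k' \<Longrightarrow> k' < n \<Longrightarrow> hi n k \<le> lo k'"
  unfolding hi_def lo_def using power_decreasing[of "Suc k" k' "1/2::real"] by auto
lemma lo_Suc_ge: "1/2 \<le> lo (Suc k)"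
proof -
  have "(1/2::real)^(Suc k) \<le> 1/2" using power_decreasing[of 1 "Suc k" "1/2::real"] by simp
  then show ?thesis unfolding lo_def by simp
qed

lemma pchain_in:
  "distinct js \<Longrightarrow> js \<noteq> [] \<Longrightarrow> k < length js \<Longrightarrow> 0 \<le> s \<Longrightarrow> s \<le> 1 \<Longrightarrow>
   pchain js s (js ! k) = ramp (lo k) (hi (length js) k) s"
proof (induction js arbitrary: k s)
  case Nil then show ?case by simp
next
  case (Cons j js')
  show ?case
  proof (cases js')
    case Nil
    then have k: "k = 0" using Cons by simp
    show ?thesis using Cons.prems unfolding Nil k
      by (auto simp: Epath_def unitv_def ramp_def lo_def hi_def)
  next
    case (Cons v vs)
    have pc: "pchain (j # js') = pcat (Epath j) (pchain js')" unfolding Cons by simp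
    have jn: "j \<notin> set js'" using Cons.prems by simp
    show ?thesis
    proof (cases k)
      case 0
      have h1: "hi (length (j # js')) 0 = 1/2" unfolding hi_def Cons by simp
      have h2: "lo 0 = 0" unfolding lo_def by simp
      show ?thesis unfolding pc 0 h1 h2 using Cons.prems pchain_out[OF jn]
        by (auto simp: pcat_def Epath_def unitv_def ramp_def)
    next
      case (Suc k')
      have k': "k' < length js'" using Cons.prems Suc by simp
      have ne: "js' ! k' \<noteq> j" using Cons.prems k' by (metis distinct.simps(2) nth_mem)
      have dj: "distinct js'" "js' \<noteq> []" using Cons.prems Cons by auto
      show ?thesis
      proof (cases "s < 1/2")
        case True
        have "ramp (lo k) (hi (length (j # js')) k) s = 0"
          using True lo_Suc_ge[of k'] unfolding Suc ramp_def by auto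
        then show ?thesis unfolding pc Suc using True ne by (simp add: pcat_def Epath_def unitv_def)
      next
        case False
        have "pchain js' (2 * s - 1) (js' ! k') = ramp (lo k') (hi (length js') k') (2 * s - 1)"
          using Cons.IH[OF dj k'] Cons.prems False by simp
        also have "\<dots> = ramp (lo k) (hi (length (j # js')) k) s"
          using ramp_shift[OF lo_hi[OF k']] unfolding Suc by (simp add: lo_Suc hi_Suc[OF k'])
        finally show ?thesis unfolding pc Suc using False ne by (simp add: pcat_def Epath_def unitv_def)
      qed
    qed
  qed
qed

lemma sig2_chain:
  assumes d: "distinct js" "js \<noteq> []" and k: "k < length js" "k' < length js"
  shows "sig2 (pchain js) (js ! k) (js ! k') = (if k < k' then 1 else if k = k' then 1/2 else 0)"
proof -
  let ?n = "length js"
  have f: "\<And>k s. k < ?n \<Longrightarrow> 0 < s \<Longrightarrow> s < 1 \<Longrightarrow> (\<lambda>s. pchain js s (js ! k)) s = ramp (lo k) (hi ?n k) s"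
    using pchain_in[OF d] by simp
  have "sig2 (pchain js) (js ! k) (js ! k') = integral SS (\<lambda>p. deriv (\<lambda>s. pchain js s (js ! k)) (fst p) * deriv (\<lambda>s. pchain js s (js ! k')) (snd p))"
    unfolding sig2_def SS_def by simp
  also have "\<dots> = 1 / (hi ?n k - lo k) * (1 / (hi ?n k' - lo k')) * integral {p. 0 < fst p \<and> fst p < snd p \<and> snd p < 1 \<and>
        lo k < fst p \<and> fst p < hi ?n k \<and> lo k' < snd p \<and> snd p < hi ?n k'} (\<lambda>_. 1)"
    by (rule int_reduce[OF f[OF k(1)] f[OF k(2)] lo_ge0 lo_hi[OF k(1)] hi_le1 lo_ge0 lo_hi[OF k(2)] hi_le1])
  also have "\<dots> = (if k < k' then 1 else if k = k' then 1/2 else 0)"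
  proof -
    have lh: "lo k < hi ?n k" "lo k' < hi ?n k'" using k lo_hi by auto
    consider "k < k'" | "k' < k" | "k = k'" by linarith
    then show ?thesis
    proof cases
      case 1
      show ?thesis using region_box[OF lo_ge0 lh(1) hi_lo[OF 1 k(2)] lh(2) hi_le1] 1 lh by simp
    next
      case 2
      show ?thesis using region_empty[OF hi_lo[OF 2 k(1)]] 2 by simp
    next
      case 3
      have "{p. 0 < fst p \<and> fst p < snd p \<and> snd p < 1 \<and>
        lo k < fst p \<and> fst p < hi ?n k \<and> lo k' < snd p \<and> snd p < hi ?n k'} =
        {p. lo k < fst p \<and> fst p < snd p \<and> snd p < hi ?n k}"
        using 3 lo_ge0[of k] hi_le1[of ?n k] by (auto simp del: One_nat_def)
      then show ?thesis using triangle[OF lh(1)] 3 lh by (simp add: power2_eq_square)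
    qed
  qed
  finally show ?thesis .
qed

lemma sig2_out:
  assumes "a \<notin> set js \<or> b \<notin> set js"
  shows "sig2 (pchain js) a b = 0"
proof -
  have "(\<lambda>p::real\<times>real. deriv (\<lambda>s. pchain js s a) (fst p) * deriv (\<lambda>s. pchain js s b) (snd p)) = (\<lambda>p. 0)"
  proof (cases "a \<notin> set js")
    case True
    then have "(\<lambda>s. pchain js s a) = (\<lambda>s. 0)" using pchain_out by auto
    then show ?thesis by simp
  next
    case False
    then have "(\<lambda>s. pchain js s b) = (\<lambda>s. 0)" using pchain_out assms by auto
    then show ?thesis by simp
  qed
  then show ?thesis unfolding sig2_def by simp
qed

lemma sig2_upt:
  assumes "p < q"
  shows "sig2 (pchain [p..<q]) a b =
    (if p \<le> a \<and> a < q \<and> p \<le> b \<and> b < q then (if a < b then 1 else if a = b then 1/2 else 0) else 0)"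
proof (cases "p \<le> a \<and> a < q \<and> p \<le> b \<and> b < q")
  case True
  have "sig2 (pchain [p..<q]) ([p..<q] ! (a - p)) ([p..<q] ! (b - p)) =
     (if a - p < b - p then 1 else if a - p = b - p then 1/2 else 0)"
    by (rule sig2_chain) (use assms True in auto)
  moreover have "[p..<q] ! (a - p) = a" "[p..<q] ! (b - p) = b" using True by auto
  moreover have "(a - p < b - p) = (a < b)" "(a - p = b - p) = (a = b)" using True by auto
  ultimately show ?thesis using True by (simp only: if_True simp_thms)
next
  case False
  then have "a \<notin> set [p..<q] \<or> b \<notin> set [p..<q]" by auto
  then show ?thesis using False by (simp only: sig2_out if_False simp_thms)
qed

lemma ramp_1: "l < r \<Longrightarrow> r \<le> 1 \<Longrightarrow> ramp l r 1 = 1" unfolding ramp_def by auto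
lemma ramp_0: "0 \<le> l \<Longrightarrow> ramp l r 0 = 0" unfolding ramp_def by auto

lemma lvl1_upt:
  assumes "p < q"
  shows "pchain [p..<q] 1 a - pchain [p..<q] 0 a = (if p \<le> a \<and> a < q then 1 else 0)"
proof (cases "p \<le> a \<and> a < q")
  case True
  have nth: "[p..<q] ! (a - p) = a" using True by auto
  have e: "pchain [p..<q] s ([p..<q] ! (a - p)) = ramp (lo (a-p)) (hi (length [p..<q]) (a-p)) s"
    if "0 \<le> s" "s \<le> 1" for s
    by (rule pchain_in) (use assms True that in auto)
  have lh: "lo (a - p) < hi (length [p..<q]) (a - p)" using lo_hi[of "a - p" "q - p"] True by (simp add: diff_less_mono)
  have "pchain [p..<q] 1 a = 1" using e[of 1] ramp_1[OF lh hi_le1] unfolding nth by simp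
  moreover have "pchain [p..<q] 0 a = 0" using e[of 0] ramp_0[OF lo_ge0] unfolding nth by simp
  ultimately show ?thesis using True by simp
next
  case False
  then have "a \<notin> set [p..<q]" by auto
  then show ?thesis using False by (simp only: pchain_out if_False simp_thms diff_self)
qed

lemma tadd_alt: "tadd x y = (fst x + fst y, \<lambda>k. fst (snd x) k + fst (snd y) k, \<lambda>k l. snd (snd x) k l + snd (snd y) k l)"
  by (cases x; cases y) (simp add: tadd_def)
lemma tadd_simp: "tadd (a,v,M) (b,w,P) = (a+b, \<lambda>k. v k + w k, \<lambda>k l. M k l + P k l)"
  by (simp add: tadd_def)
lemma tscale_simp: "tscale c (a,v,M) = (c * a, \<lambda>k. c * v k, \<lambda>k l. c * M k l)"
  by (simp add: tscale_def)
lemma tmul_simp: "tmul (a,v,M) (b,w,P) = (a*b, \<lambda>k. a * w k + b * v k, \<lambda>k l. a * P k l + b * M k l + v k * w l)"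
  by (simp add: tmul_def)
lemma texp0: "texp (0,v,A) = (1, v, \<lambda>k l. A k l + v k * v l / 2)"
  by (simp add: texp_def tone_def tadd_simp tscale_simp tmul_simp)

definition LL :: "nat \<Rightarrow> tens set" where
  "LL m = {(a,v,M). a = 0 \<and> (\<forall>k. m \<le> k \<longrightarrow> v k = 0) \<and> (\<forall>k l. M k l + M l k = 0) \<and> (\<forall>k l. m \<le> k \<longrightarrow> M k l = 0)}"

lemma LL_iff: "(a,v,M) \<in> LL m \<longleftrightarrow> a = 0 \<and> (\<forall>k. m \<le> k \<longrightarrow> v k = 0) \<and> (\<forall>k l. M k l + M l k = 0) \<and> (\<forall>k l. m \<le> k \<longrightarrow> M k l = 0)"
  by (simp add: LL_def)

lemma lie_sub: "x \<in> lie_gen m \<Longrightarrow> x \<in> LL m"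
proof (induction rule: lie_gen.induct)
  case (gen j)
  then show ?case by (auto simp: LL_iff unitv_def)
next
  case (add x y)
  obtain a v M where x: "x = (a,v,M)" by (cases x)
  obtain b w P where y: "y = (b,w,P)" by (cases y)
  have "\<forall>k l. M k l + M l k = 0" "\<forall>k l. P k l + P l k = 0" using add.IH unfolding x y LL_iff by auto
  then have "\<forall>k l. M k l + P k l + (M l k + P l k) = 0"
    by (metis add.commute add.left_commute add_0_right)
  then show ?case using add.IH unfolding x y tadd_simp LL_iff by simp
next
  case (scale x c)
  obtain a v M where x: "x = (a,v,M)" by (cases x)
  have "\<forall>k l. M k l + M l k = 0" using scale.IH unfolding x LL_iff by auto
  then have "\<forall>k l. c * M k l + c * M l k = 0" by (metis distrib_left mult_zero_right)
  then show ?case using scale.IH unfolding x tscale_simp LL_iff by simp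
next
  case (brk x y)
  obtain a v M where x: "x = (a,v,M)" by (cases x)
  obtain b w P where y: "y = (b,w,P)" by (cases y)
  show ?case using brk.IH unfolding x y tbracket_def tadd_simp tmul_simp tscale_simp LL_iff by (simp add: algebra_simps)
qed

lemma zero_in: "0 < m \<Longrightarrow> (0, \<lambda>_. 0, \<lambda>_ _. 0) \<in> lie_gen m"
  using lie_gen.scale[OF lie_gen.gen[of 0 m], of 0] by (simp add: tscale_simp)

lemma sum_in:
  fixes n :: nat
  assumes "0 < m" "\<forall>i<n. (0, V i, M i) \<in> lie_gen m"
  shows "(0, \<lambda>k. \<Sum>i<n. V i k, \<lambda>k l. \<Sum>i<n. M i k l) \<in> lie_gen m"
  using assms(2)
proof (induction n)
  case 0 then show ?case using zero_in[OF assms(1)] by simp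
next
  case (Suc n)
  have "tadd (0, \<lambda>k. \<Sum>i<n. V i k, \<lambda>k l. \<Sum>i<n. M i k l) (0, V n, M n) \<in> lie_gen m"
    using Suc by (intro lie_gen.add) auto
  then show ?case by (simp add: tadd_simp)
qed

lemma gen_sc: "k < m \<Longrightarrow> (0, \<lambda>i. c * unitv k i, \<lambda>_ _. 0) \<in> lie_gen m"
  using lie_gen.scale[OF lie_gen.gen[of k m], of c] by (simp add: tscale_simp)

lemma brk_sc: "k < m \<Longrightarrow> l < m \<Longrightarrow>
   (0, \<lambda>_. 0, \<lambda>i j. c * (unitv k i * unitv l j - unitv l i * unitv k j)) \<in> lie_gen m"
  using lie_gen.scale[OF lie_gen.brk[OF lie_gen.gen[of k m] lie_gen.gen[of l m]], of c]
  by (simp add: tscale_simp tbracket_def tadd_simp tmul_simp algebra_simps)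

lemma dsum:
  fixes f :: "nat \<Rightarrow> nat \<Rightarrow> real"
  shows "(\<Sum>k<m. \<Sum>l<m. f k l * (unitv k i * unitv l j)) = (if i < m \<and> j < m then f i j else 0)"
proof -
  have 1: "(\<Sum>l<m. f k l * (unitv k i * unitv l j)) = (if k = i then (if j < m then f k j else 0) else 0)" for k
  proof (cases "k = i")
    case True
    have "(\<Sum>l<m. f k l * (unitv k i * unitv l j)) = (\<Sum>l<m. if l = j then f k l else 0)"
      by (rule sum.cong) (auto simp: unitv_def True)
    also have "\<dots> = (if j < m then f k j else 0)" by (simp add: sum.delta)
    finally show ?thesis using True by simp
  next
    case False
    then show ?thesis by (simp add: unitv_def)
  qed
  have "(\<Sum>k<m. \<Sum>l<m. f k l * (unitv k i * unitv l j)) = (\<Sum>k<m. if k = i then (if j < m then f k j else 0) else 0)"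
    using 1 by simp
  also have "\<dots> = (if i < m \<and> j < m then f i j else 0)" by (simp add: sum.delta)
  finally show ?thesis .
qed

lemma lie_sup:
  assumes m: "0 < m" and x: "(0, v, A) \<in> LL m"
  shows "(0, v, A) \<in> lie_gen m"
proof -
  have vs: "\<And>k. m \<le> k \<Longrightarrow> v k = 0" and as: "\<And>k l. A k l = - A l k"
    and az: "\<And>k l. m \<le> k \<Longrightarrow> A k l = 0" using x by (auto simp: LL_iff eq_neg_iff_add_eq_0)
  have az2: "\<And>k l. m \<le> l \<Longrightarrow> A k l = 0" using as az by (metis minus_zero)
  have 1: "(0, \<lambda>i. \<Sum>k<m. v k * unitv k i, \<lambda>i j. \<Sum>k<m. 0) \<in> lie_gen m"
    by (rule sum_in[OF m]) (simp add: gen_sc)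
  have v: "(\<lambda>i. \<Sum>k<m. v k * unitv k i) = v"
  proof
    fix i show "(\<Sum>k<m. v k * unitv k i) = v i"
      using vs[of i] by (auto simp: unitv_def if_distrib sum.delta' cong: if_cong)
  qed
  have 2: "(0, \<lambda>i. \<Sum>k<m. 0, \<lambda>i j. \<Sum>k<m. \<Sum>l<m. A k l / 2 * (unitv k i * unitv l j - unitv l i * unitv k j)) \<in> lie_gen m"
  proof (rule sum_in[OF m], intro allI impI)
    fix k assume k: "k < m"
    show "(0, \<lambda>i. 0, \<lambda>i j. \<Sum>l<m. A k l / 2 * (unitv k i * unitv l j - unitv l i * unitv k j)) \<in> lie_gen m"
    proof -
      have pre: "\<forall>l<m. (0, \<lambda>i. 0::real, \<lambda>i j. A k l / 2 * (unitv k i * unitv l j - unitv l i * unitv k j)) \<in> lie_gen m"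
        using brk_sc[OF k] by blast
      show ?thesis using sum_in[OF m pre] by simp
    qed
  qed
  have A: "(\<lambda>i j. \<Sum>k<m. \<Sum>l<m. A k l / 2 * (unitv k i * unitv l j - unitv l i * unitv k j)) = A"
  proof (intro ext)
    fix i j
    have "(\<Sum>k<m. \<Sum>l<m. A k l / 2 * (unitv k i * unitv l j - unitv l i * unitv k j)) =
          (\<Sum>k<m. \<Sum>l<m. A k l / 2 * (unitv k i * unitv l j)) - (\<Sum>k<m. \<Sum>l<m. A k l / 2 * (unitv l i * unitv k j))"
      by (simp add: right_diff_distrib sum_subtractf)
    also have "(\<Sum>k<m. \<Sum>l<m. A k l / 2 * (unitv k i * unitv l j)) = (if i < m \<and> j < m then A i j / 2 else 0)"
      by (rule dsum)
    also have "(\<Sum>k<m. \<Sum>l<m. A k l / 2 * (unitv l i * unitv k j)) = (if i < m \<and> j < m then A j i / 2 else 0)"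
      by (subst sum.swap) (rule dsum[where f="\<lambda>l k. A k l / 2"])
    finally show "(\<Sum>k<m. \<Sum>l<m. A k l / 2 * (unitv k i * unitv l j - unitv l i * unitv k j)) = A i j"
      using as[of i j] az[of i j] az[of j i] by auto
  qed
  have "tadd (0, \<lambda>i. \<Sum>k<m. v k * unitv k i, \<lambda>i j. \<Sum>k<m. 0)
    (0, \<lambda>i. \<Sum>k<m. 0, \<lambda>i j. \<Sum>k<m. \<Sum>l<m. A k l / 2 * (unitv k i * unitv l j - unitv l i * unitv k j)) \<in> lie_gen m"
    using 1 2 by (rule lie_gen.add)
  then show ?thesis unfolding tadd_simp v A by simp
qed

lemma LL_fst: "x \<in> LL m \<Longrightarrow> \<exists>v A. x = (0, v, A)"
  by (cases x) (auto simp: LL_iff)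

lemma texp_inj: "texp (0, v, A) = texp (0, w, B) \<Longrightarrow> v = w \<and> A = B"
  by (auto simp: texp0 fun_eq_iff)

lemma tlog_texp:
  assumes "(0, v, A) \<in> lie_gen m"
  shows "tlog m (texp (0, v, A)) = (0, v, A)"
  unfolding tlog_def
proof (rule the_equality)
  show "(0, v, A) \<in> lie_gen m \<and> texp (0, v, A) = texp (0, v, A)" using assms by simp
next
  fix z assume z: "z \<in> lie_gen m \<and> texp z = texp (0, v, A)"
  then obtain w B where zz: "z = (0, w, B)" using LL_fst lie_sub by blast
  show "z = (0, v, A)" using z texp_inj unfolding zz by blast
qed

lemma tinv_texp: "tinv (texp (0, v, A)) = texp (0, \<lambda>k. - v k, \<lambda>k l. - A k l)"
  unfolding tinv_def
proof (rule the_equality)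
  show "tmul (texp (0, \<lambda>k. - v k, \<lambda>k l. - A k l)) (texp (0, v, A)) = tone \<and>
    tmul (texp (0, v, A)) (texp (0, \<lambda>k. - v k, \<lambda>k l. - A k l)) = tone"
    by (simp add: texp0 tmul_simp tone_def fun_eq_iff algebra_simps)
next
  fix y assume y: "tmul y (texp (0, v, A)) = tone \<and> tmul (texp (0, v, A)) y = tone"
  obtain a w P where yy: "y = (a, w, P)" by (cases y)
  have y1: "tmul (a, w, P) (texp (0, v, A)) = tone" using y unfolding yy by simp
  have c: "a = 1 \<and> (\<forall>k. a * v k + w k = 0) \<and> (\<forall>k l. a * (A k l + v k * v l / 2) + P k l + w k * v l = 0)"
    using y1 unfolding texp0 tmul_simp tone_def by (clarsimp simp: fun_eq_iff)
  then have e: "a = 1" "\<And>k. a * v k + w k = 0" "\<And>k l. a * (A k l + v k * v l / 2) + P k l + w k * v l = 0"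
    by auto
  have w: "w k = - v k" for k using e(2)[of k] unfolding e(1) by linarith
  have P: "\<And>k l. P k l = - A k l + v k * v l / 2" using e(3) unfolding e(1) w by (simp add: algebra_simps) 
  show "y = texp (0, \<lambda>k. - v k, \<lambda>k l. - A k l)" unfolding yy texp0 e(1)
    by (simp add: fun_eq_iff w P)
qed

lemma tmul_texp: "tmul (texp (0, v, A)) (texp (0, w, B)) =
   texp (0, \<lambda>k. v k + w k, \<lambda>k l. A k l + B k l + (v k * w l - w k * v l) / 2)"
  by (simp add: texp0 tmul_simp fun_eq_iff field_simps)

lemma log_quot:
  assumes m: "0 < m" and u: "(0, u, B) \<in> LL m" and v: "(0, v, A) \<in> LL m"
  shows "tlog m (tmul (tinv (texp (0, u, B))) (texp (0, v, A))) =
     (0, \<lambda>k. v k - u k, \<lambda>k l. A k l - B k l + (v k * u l - u k * v l) / 2)"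
proof -
  have "tmul (tinv (texp (0, u, B))) (texp (0, v, A)) =
     texp (0, \<lambda>k. v k - u k, \<lambda>k l. A k l - B k l + (v k * u l - u k * v l) / 2)"
    unfolding tinv_texp tmul_texp by (simp add: fun_eq_iff field_simps)
  moreover have "(0, \<lambda>k. v k - u k, \<lambda>k l. A k l - B k l + (v k * u l - u k * v l) / 2) \<in> LL m"
  proof -
    have "\<forall>k l. A k l + A l k = 0" "\<forall>k l. B k l + B l k = 0" using u v by (auto simp: LL_iff)
    moreover have "A k l - B k l + (v k * u l - u k * v l) / 2 + (A l k - B l k + (v l * u k - u l * v k) / 2)
       = (A k l + A l k) - (B k l + B l k)" for k l by (simp add: field_simps)
    ultimately have "\<forall>k l. A k l - B k l + (v k * u l - u k * v l) / 2 + (A l k - B l k + (v l * u k - u l * v k) / 2) = 0"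
      by simp
    then show ?thesis using u v by (auto simp: LL_iff)
  qed
  ultimately show ?thesis using tlog_texp lie_sup[OF m] by simp
qed

lemma tsum_map: "tsum_list (map f xs) = (sum_list (map (\<lambda>x. fst (f x)) xs),
   \<lambda>k. sum_list (map (\<lambda>x. fst (snd (f x)) k) xs), \<lambda>k l. sum_list (map (\<lambda>x. snd (snd (f x)) k l) xs))"
  by (induction xs) (simp_all add: tsum_list_def tzero_def tadd_alt)

lemma sl_upt: "sum_list (map h [0..<N]) = (\<Sum>i<N. h i)"
  by (induction N) simp_all

lemma sum1: "(\<Sum>i<N. V i k - c) = (\<Sum>i<N. V i k) - real N * (c::real)"
  by (induction N) (simp_all add: algebra_simps)

lemma sum2: "(\<Sum>i<N. M i k l - b + (V i k * x - y * V i l) / 2) =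
   (\<Sum>i<N. M i k l) - real N * (b::real) + ((\<Sum>i<N. V i k) * x - y * (\<Sum>i<N. V i l)) / 2"
  by (induction N) (simp_all add: field_simps)

lemma bary_eq:
  assumes m: "0 < m" and N: "0 < N" and L: "\<forall>i<N. (0, V i, M i) \<in> LL m"
  shows "bary m (map (\<lambda>i. texp (0, V i, M i)) [0..<N]) =
     texp (0, \<lambda>k. (\<Sum>i<N. V i k) / N, \<lambda>k l. (\<Sum>i<N. M i k l) / N)"
proof -
  define u where "u = (\<lambda>k. (\<Sum>i<N. V i k) / N)"
  define B where "B = (\<lambda>k l. (\<Sum>i<N. M i k l) / N)"
  have Vz: "\<And>i k. i < N \<Longrightarrow> m \<le> k \<Longrightarrow> V i k = 0" and Ma: "\<And>i k l. i < N \<Longrightarrow> M i k l + M i l k = 0"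
    and Mz: "\<And>i k l. i < N \<Longrightarrow> m \<le> k \<Longrightarrow> M i k l = 0" using L by (auto simp: LL_iff)
  have uB: "(0, u, B) \<in> LL m"
  proof -
    have "B k l + B l k = 0" for k l
    proof -
      have "B k l + B l k = (\<Sum>i<N. M i k l + M i l k) / N" unfolding B_def by (simp add: sum.distrib add_divide_distrib)
      also have "\<dots> = 0" using Ma by simp
      finally show ?thesis .
    qed
    then show ?thesis using Vz Mz unfolding LL_iff u_def B_def by auto
  qed
  have key: "tsum_list (map (\<lambda>x. tlog m (tmul (tinv (texp (0,u',B'))) x)) (map (\<lambda>i. texp (0, V i, M i)) [0..<N]))
     = (0, \<lambda>k. (\<Sum>i<N. V i k) - real N * u' k,
          \<lambda>k l. (\<Sum>i<N. M i k l) - real N * B' k l + ((\<Sum>i<N. V i k) * u' l - u' k * (\<Sum>i<N. V i l)) / 2)"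
    if u': "(0, u', B') \<in> LL m" for u' B'
  proof -
    have "map (\<lambda>x. tlog m (tmul (tinv (texp (0,u',B'))) x)) (map (\<lambda>i. texp (0, V i, M i)) [0..<N])
      = map (\<lambda>i. (0, \<lambda>k. V i k - u' k, \<lambda>k l. M i k l - B' k l + (V i k * u' l - u' k * V i l) / 2)) [0..<N]"
      using log_quot[OF m u'] L by auto
    then show ?thesis by (simp add: tsum_map sl_upt sum1 sum2)
  qed
  show ?thesis
    unfolding bary_def
  proof (rule the_equality, intro conjI)
    show "texp (0, \<lambda>k. (\<Sum>i<N. V i k) / N, \<lambda>k l. (\<Sum>i<N. M i k l) / N) \<in> Gm2 m"
      using lie_sup[OF m uB] unfolding Gm2_def u_def B_def by blast
    have "real N * u k = (\<Sum>i<N. V i k)" for k unfolding u_def using N by simp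
    moreover have "real N * B k l = (\<Sum>i<N. M i k l)" for k l unfolding B_def using N by simp
    ultimately show "tsum_list (map (\<lambda>x. tlog m (tmul (tinv (texp (0, \<lambda>k. (\<Sum>i<N. V i k) / N, \<lambda>k l. (\<Sum>i<N. M i k l) / N))) x))
          (map (\<lambda>i. texp (0, V i, M i)) [0..<N])) = tzero"
      using key[OF uB] unfolding u_def B_def tzero_def by (simp add: fun_eq_iff)
  next
    fix \<mu> assume mu: "\<mu> \<in> Gm2 m \<and> tsum_list (map (\<lambda>x. tlog m (tmul (tinv \<mu>) x)) (map (\<lambda>i. texp (0, V i, M i)) [0..<N])) = tzero"
    then obtain w where w: "w \<in> lie_gen m" "\<mu> = texp w" unfolding Gm2_def by blast
    then obtain u' B' where wu: "w = (0, u', B')" using LL_fst lie_sub by blast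
    have LLw: "(0, u', B') \<in> LL m" using w wu lie_sub by simp
    have eqs: "(\<lambda>k. (\<Sum>i<N. V i k) - real N * u' k) = (\<lambda>_. 0)"
       "(\<lambda>k l. (\<Sum>i<N. M i k l) - real N * B' k l + ((\<Sum>i<N. V i k) * u' l - u' k * (\<Sum>i<N. V i l)) / 2) = (\<lambda>_ _. 0)"
      using mu key[OF LLw] unfolding w(2) wu tzero_def by auto
    have uu: "u' = u"
    proof
      fix k have "(\<Sum>i<N. V i k) - real N * u' k = 0" using fun_cong[OF eqs(1), of k] by simp
      then show "u' k = u k" unfolding u_def using N by (simp add: field_simps)
    qed
    have BB: "B' = B"
    proof (intro ext)
      fix k l
      have "(\<Sum>i<N. M i k l) - real N * B' k l + ((\<Sum>i<N. V i k) * u' l - u' k * (\<Sum>i<N. V i l)) / 2 = 0"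
        using fun_cong[OF fun_cong[OF eqs(2), of k], of l] by simp
      moreover have "(\<Sum>i<N. V i k) = real N * u' k" "(\<Sum>i<N. V i l) = real N * u' l"
        unfolding uu u_def using N by simp_all
      ultimately have "(\<Sum>i<N. M i k l) - real N * B' k l = 0" by (simp add: algebra_simps)
      then show "B' k l = B k l" unfolding B_def using N by (simp add: field_simps)
    qed
    show "\<mu> = texp (0, \<lambda>k. (\<Sum>i<N. V i k) / N, \<lambda>k l. (\<Sum>i<N. M i k l) / N)"
      unfolding w(2) wu uu BB u_def B_def ..
  qed
qed

lemma pref_Suc: "i < length \<alpha> \<Longrightarrow> pref \<alpha> (Suc i) = pref \<alpha> i + \<alpha> ! i"
  unfolding pref_def by (simp add: take_Suc_conv_app_nth)

lemma pref_mono: "i \<le> j \<Longrightarrow> pref \<alpha> i \<le> pref \<alpha> j"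
proof -
  assume "i \<le> j"
  then obtain d where "j = i + d" by (metis le_add_diff_inverse)
  then show ?thesis unfolding pref_def by (simp add: take_add)
qed

lemma pref_len: "pref \<alpha> (length \<alpha>) = sum_list \<alpha>"
  unfolding pref_def by simp

lemma block_ex: "k < pref \<alpha> n \<Longrightarrow> \<exists>i<n. pref \<alpha> i \<le> k \<and> k < pref \<alpha> (Suc i)"
proof (induction n)
  case 0 then show ?case by (simp add: pref_def)
next
  case (Suc n)
  show ?case
  proof (cases "k < pref \<alpha> n")
    case True then show ?thesis using Suc.IH less_Suc_eq by blast
  next
    case False then show ?thesis using Suc.prems by auto
  qed
qed

lemma block_uniq:
  assumes "pref \<alpha> i \<le> k" "k < pref \<alpha> (Suc i)" "pref \<alpha> j \<le> k" "k < pref \<alpha> (Suc j)"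
  shows "i = j"
proof (rule ccontr)
  assume "i \<noteq> j"
  then consider "Suc i \<le> j" | "Suc j \<le> i" by linarith
  then show False
  proof cases
    case 1 then show False using pref_mono[OF 1, of \<alpha>] assms by linarith
  next
    case 2 then show False using pref_mono[OF 2, of \<alpha>] assms by linarith
  qed
qed

theorem lemma7p7:
  fixes m :: nat and \<alpha> :: "nat list"
  assumes "is_composition m \<alpha>"
  shows "\<forall>a<m. \<forall>b<m. W \<alpha> a b =
     1 / (2 * real (length \<alpha>)) *
       bdsum \<alpha> (\<lambda>i k l. Umat (\<alpha> ! i) k l - transp (Umat (\<alpha> ! i)) k l) a b
     + 1 / (2 * real (length \<alpha>) ^ 2)"
proof (intro allI impI)
  fix a b assume a: "a < m" and b: "b < m"
  define N where "N = length \<alpha>"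
  have pos: "\<And>i. i < N \<Longrightarrow> 0 < \<alpha> ! i" and sm: "sum_list \<alpha> = m"
    using assms unfolding is_composition_def N_def by auto
  have m0: "0 < m" using a by simp
  have N0: "0 < N" using sm m0 unfolding N_def by (cases \<alpha>) auto
  define p where "p = (\<lambda>i. pref \<alpha> i)"
  define q where "q = (\<lambda>i. pref \<alpha> (Suc i))"
  have pq: "\<And>i. i < N \<Longrightarrow> p i < q i" unfolding p_def q_def N_def using pos pref_Suc
    by (metis N_def add_less_cancel_left add.right_neutral)
  have qm: "\<And>i. i < N \<Longrightarrow> q i \<le> m" unfolding q_def
    using pref_mono[of _ N \<alpha>] pref_len[of \<alpha>] sm unfolding N_def by (metis Suc_leI)
  define V where "V = (\<lambda>i k. if p i \<le> k \<and> k < q i then 1 else (0::real))"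
  define M where "M = (\<lambda>i k l. if p i \<le> k \<and> k < q i \<and> p i \<le> l \<and> l < q i
      then (if k < l then 1/2 else if k = l then 0 else - 1/2) else (0::real))"
  have sigAx: "sig (Ax \<alpha> i) = texp (0, V i, M i)" if i: "i < N" for i
  proof -
    have ax: "Ax \<alpha> i = pchain [p i..<q i]" unfolding Ax_def p_def q_def ..
    show ?thesis unfolding sig_def texp0 ax using pq[OF i]
      by (auto simp: lvl1_upt sig2_upt V_def M_def fun_eq_iff)
  qed
  have L: "\<forall>i<N. (0, V i, M i) \<in> LL m"
  proof (intro allI impI)
    fix i assume i: "i < N"
    show "(0, V i, M i) \<in> LL m" unfolding LL_iff V_def M_def using qm[OF i] by auto
  qed
  have mp: "map (\<lambda>i. sig (Ax \<alpha> i)) [0..<N] = map (\<lambda>i. texp (0, V i, M i)) [0..<N]"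
    using sigAx by simp
  have Wf: "W \<alpha> = (\<lambda>k l. (\<Sum>i<N. M i k l) / N + (\<Sum>i<N. V i k) / N * ((\<Sum>i<N. V i l) / N) / 2)"
    unfolding W_def bary2_def sm N_def[symmetric] mp bary_eq[OF m0 N0 L] by (simp add: texp0)
  have blk: "\<And>k. k < m \<Longrightarrow> \<exists>i<N. p i \<le> k \<and> k < q i"
    using block_ex[of _ \<alpha> N] pref_len[of \<alpha>] sm unfolding p_def q_def N_def by simp
  have uq: "\<And>i j k. p i \<le> k \<Longrightarrow> k < q i \<Longrightarrow> p j \<le> k \<Longrightarrow> k < q j \<Longrightarrow> i = j"
    unfolding p_def q_def using block_uniq by blast
  obtain i0 where i0: "i0 < N" "p i0 \<le> a" "a < q i0" using blk[OF a] by blast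
  have Vs: "\<And>k. k < m \<Longrightarrow> (\<Sum>i<N. V i k) = 1"
  proof -
    fix k assume k: "k < m"
    obtain j where j: "j < N" "p j \<le> k" "k < q j" using blk[OF k] by blast
    have "(\<Sum>i<N. V i k) = (\<Sum>i<N. if i = j then 1 else 0)"
      by (rule sum.cong) (use j uq in \<open>auto simp: V_def\<close>)
    then show "(\<Sum>i<N. V i k) = 1" using j by simp
  qed
  have Ms: "(\<Sum>i<N. M i a b) = M i0 a b"
  proof -
    have "(\<Sum>i<N. M i a b) = (\<Sum>i<N. if i = i0 then M i0 a b else 0)"
      by (rule sum.cong) (use i0 uq in \<open>auto simp: M_def\<close>)
    then show ?thesis using i0 by simp
  qed
  have bd: "bdsum \<alpha> (\<lambda>i k l. Umat (\<alpha> ! i) k l - transp (Umat (\<alpha> ! i)) k l) a b = 2 * M i0 a b"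
  proof (cases "p i0 \<le> b \<and> b < q i0")
    case True
    have ex: "\<exists>i<length \<alpha>. pref \<alpha> i \<le> a \<and> a < pref \<alpha> (Suc i) \<and> pref \<alpha> i \<le> b \<and> b < pref \<alpha> (Suc i)"
      using i0 True unfolding p_def q_def N_def by blast
    have th: "(THE i. i < length \<alpha> \<and> pref \<alpha> i \<le> a \<and> a < pref \<alpha> (Suc i)) = i0"
      by (rule the_equality) (use i0 uq in \<open>auto simp: p_def q_def N_def\<close>)
    have len: "q i0 - p i0 = \<alpha> ! i0" unfolding p_def q_def using pref_Suc i0(1) unfolding N_def by simp
    have "bdsum \<alpha> (\<lambda>i k l. Umat (\<alpha> ! i) k l - transp (Umat (\<alpha> ! i)) k l) a b =
        Umat (\<alpha> ! i0) (a - p i0) (b - p i0) - Umat (\<alpha> ! i0) (b - p i0) (a - p i0)"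
      unfolding bdsum_def using ex th by (simp add: transp_def p_def Let_def)
    also have "\<dots> = 2 * M i0 a b"
      using i0 True len unfolding Umat_def M_def by auto
    finally show ?thesis .
  next
    case False
    have nex: "\<not> (\<exists>i<length \<alpha>. pref \<alpha> i \<le> a \<and> a < pref \<alpha> (Suc i) \<and> pref \<alpha> i \<le> b \<and> b < pref \<alpha> (Suc i))"
      using False i0 uq unfolding p_def q_def by blast
    have "M i0 a b = 0" using False by (simp add: M_def)
    then show ?thesis unfolding bdsum_def by (simp only: if_not_P[OF nex] mult_zero_right)
  qed
  show "W \<alpha> a b = 1 / (2 * real (length \<alpha>)) *
       bdsum \<alpha> (\<lambda>i k l. Umat (\<alpha> ! i) k l - transp (Umat (\<alpha> ! i)) k l) a b
     + 1 / (2 * real (length \<alpha>) ^ 2)"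
    unfolding Wf bd Ms Vs[OF a] Vs[OF b] N_def[symmetric] using N0
    by (simp add: field_simps power2_eq_square)
qed

end
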